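(* Let $c$ be a circular operator in a $\mathrm{II}_1$-factor $(\mathscr{A},\varphi)$ and let $D_t$ be the dilation semigroup on $L^2_{hol}(c)$, $D_t\big(\sum_{n\ge0}\lambda_n c^n\big)=\sum_{n\ge0}e^{-nt}\lambda_nc^n$. For each even integer $p\ge4$ there is a constant $\alpha_p$ such that for all $T\in L^2_{hol}(c)$ and all $0<t<1$, \[ \|D_tT\|_p\le\alpha_p\,t^{-1+\frac{2}{p}}\,\|T\|_2. \]
   Context: $\varphi$ is the faithful normal tracial state. A circular operator $c$ (normalized) is one whose only nonzero free cumulants in $c,c^\ast$ are $\kappa_2[c,c^\ast]=\kappa_2[c^\ast,c]=1$; equivalently $c=(s+is')/\sqrt2$ with $s,s'$ free standard semicircular. $L^2_{hol}(c)$ is the closure in $L^2(W^\ast(c),\varphi)$ of the polynomials in $c$ (not $c^\ast$); its elements are $\sum_n\lambda_nc^n$ with $\sum|\lambda_n|^2<\infty$, and $\|T\|_2^2=\varphi(TT^\ast)$. For even $p$, $\|x\|_p^p=\varphi((xx^\ast)^{p/2})$ (the noncommutative $L^p$ norm, possibly $+\infty$). *)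

theory Defs
  imports "HOL-Analysis.Analysis"
begin

text \<open>Words in c and c-star: True stands for c, False for c-star.
  The *-distribution of a normalized circular operator with respect to the trace
  is given by the moment-cumulant formula: the trace of a word equals the number of
  non-crossing pair partitions of its positions in which every block pairs a c
  with a c-star (only the second cumulants kappa2[c,c*] = kappa2[c*,c] = 1 are nonzero).\<close>

definition nc_star_pairings :: "bool list \<Rightarrow> (nat \<times> nat) set set" where
  "nc_star_pairings w = {P. P \<subseteq> {(i,j). i < j \<and> j < length w}
      \<and> (\<forall>k < length w. \<exists>!q \<in> P. fst q = k \<or> snd q = k)
      \<and> (\<forall>(i,j) \<in> P. w ! i \<noteq> w ! j)
      \<and> (\<forall>(a,b) \<in> P. \<forall>(c,d) \<in> P. \<not> (a < c \<and> c < b \<and> b < d))}"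

definition circ_trace_word :: "bool list \<Rightarrow> complex" where
  "circ_trace_word w = of_nat (card (nc_star_pairings w))"

text \<open>The truncation x_N = sum_{n<=N} a_n c^n; then
  circ_moment k a N = phi((x_N x_N^* )^k), expanded multilinearly using
  x_N x_N^* = sum_{n,m<=N} a_n conj(a_m) c^n (c^* )^m.\<close>

definition circ_moment :: "nat \<Rightarrow> (nat \<Rightarrow> complex) \<Rightarrow> nat \<Rightarrow> complex" where
  "circ_moment k a N =
     (\<Sum>nms \<in> {xs. set xs \<subseteq> {..N} \<times> {..N} \<and> length xs = k}.
        (\<Prod>(n,m) \<leftarrow> nms. a n * cnj (a m)) *
        circ_trace_word (concat (map (\<lambda>(n,m). replicate n True @ replicate m False) nms)))"

text \<open>Noncommutative L^p norm (p even) of T = sum a_n c^n, as the limit of the norms of the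
  truncations (for the operators considered here the series converge in operator norm).\<close>

definition hol_Lp_norm :: "nat \<Rightarrow> (nat \<Rightarrow> complex) \<Rightarrow> real" where
  "hol_Lp_norm p a = (cmod (lim (\<lambda>N. circ_moment (p div 2) a N))) powr (1 / real p)"

definition dilation :: "real \<Rightarrow> (nat \<Rightarrow> complex) \<Rightarrow> (nat \<Rightarrow> complex)" where
  "dilation t a = (\<lambda>n. complex_of_real (exp (- real n * t)) * a n)"

end

theory Submission
  imports Defs
begin

fun fs :: "bool list \<Rightarrow> bool list \<Rightarrow> nat" where
  "fs [] s = (if s = [] then 1 else 0)"
| "fs (x#w) s = fs w (x#s) + (case s of [] \<Rightarrow> 0 | y#s' \<Rightarrow> if y \<noteq> x then fs w s' else 0)"

lemma if_distrib_arg: "(if P then (a::nat) else 0) * d = (if P then a * d else 0)" by simp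

lemma nsw: "(\<Sum>j<L. \<Sum>i<j. g i j) = (\<Sum>i<L. \<Sum>j\<in>{Suc i..<L}. (g i j::'a::comm_monoid_add))"
proof (induction L)
  case (Suc L)
  have "(\<Sum>i<Suc L. \<Sum>j\<in>{Suc i..<Suc L}. g i j) = (\<Sum>i<L. \<Sum>j\<in>{Suc i..<Suc L}. g i j)"
    by simp
  also have "\<dots> = (\<Sum>i<L. (\<Sum>j\<in>{Suc i..<L}. g i j) + g i L)"
    by (intro sum.cong refl) simp
  finally show ?case using Suc by (simp add: sum.distrib)
qed simp

lemma fs_decomp:
  "fs w (b#s) = (\<Sum>j<length w. if w!j \<noteq> b then fs (take j w) [] * fs (drop (Suc j) w) s else 0)"
proof (induction "length w" arbitrary: w b s rule: less_induct)
  case less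
  show ?case
  proof (cases w)
    case Nil
    then show ?thesis by simp
  next
    case (Cons y w')
    let ?L = "length w'"
    have IH: "\<And>u b s. length u < length w \<Longrightarrow> fs u (b#s) = (\<Sum>j<length u. if u!j \<noteq> b then fs (take j u) [] * fs (drop (Suc j) u) s else 0)"
      using less by blast
    have e1: "fs w' (y#b#s) = (\<Sum>i<?L. if w'!i \<noteq> y then fs (take i w') [] * fs (drop (Suc i) w') (b#s) else 0)"
      using IH[of w'] Cons by simp
    have e2: "fs (drop (Suc i) w') (b#s) = (\<Sum>j\<in>{Suc i..<?L}. if w'!j \<noteq> b then fs (drop (Suc i) (take j w')) [] * fs (drop (Suc j) w') s else 0)"
      if "i < ?L" for i
    proof -
      have "fs (drop (Suc i) w') (b#s) = (\<Sum>l<?L - Suc i. if w'!(Suc i + l) \<noteq> b then fs (take l (drop (Suc i) w')) [] * fs (drop (Suc l) (drop (Suc i) w')) s else 0)"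
        using IH[of "drop (Suc i) w'"] Cons by simp
      also have "\<dots> = (\<Sum>l<?L - Suc i. (\<lambda>j. if w'!j \<noteq> b then fs (drop (Suc i) (take j w')) [] * fs (drop (Suc j) w') s else 0) (Suc i + l))"
        by (intro sum.cong refl) (simp add: take_drop drop_drop add.commute)
      also have "\<dots> = (\<Sum>j\<in>{Suc i..<?L}. if w'!j \<noteq> b then fs (drop (Suc i) (take j w')) [] * fs (drop (Suc j) w') s else 0)"
        using sum.atLeastLessThan_shift_0[of "(\<lambda>j. if w'!j \<noteq> b then fs (drop (Suc i) (take j w')) [] * fs (drop (Suc j) w') s else 0)" "Suc i" ?L]
        by (simp add: lessThan_atLeast0 comp_def)
      finally show ?thesis .
    qed
    have e3: "fs (y # take j w') [] = (\<Sum>i<j. if w'!i \<noteq> y then fs (take i w') [] * fs (drop (Suc i) (take j w')) [] else 0)"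
      if "j < ?L" for j
    proof -
      have "fs (y # take j w') [] = fs (take j w') [y]" by simp
      also have "\<dots> = (\<Sum>i<j. if (take j w')!i \<noteq> y then fs (take i (take j w')) [] * fs (drop (Suc i) (take j w')) [] else 0)"
        using IH[of "take j w'" y "[]"] Cons that by (simp add: min_def)
      also have "\<dots> = (\<Sum>i<j. if w'!i \<noteq> y then fs (take i w') [] * fs (drop (Suc i) (take j w')) [] else 0)"
        by (intro sum.cong refl) (simp add: min_def)
      finally show ?thesis .
    qed
    have "fs w (b#s) = fs w' (y#b#s) + (if b \<noteq> y then fs w' s else 0)"
      using Cons by simp
    also have "fs w' (y#b#s) = (\<Sum>i<?L. \<Sum>j\<in>{Suc i..<?L}. if w'!i \<noteq> y \<and> w'!j \<noteq> b then fs (take i w') [] * fs (drop (Suc i) (take j w')) [] * fs (drop (Suc j) w') s else 0)"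
      unfolding e1
    proof (intro sum.cong refl)
      fix i assume "i \<in> {..<?L}"
      then show "(if w'!i \<noteq> y then fs (take i w') [] * fs (drop (Suc i) w') (b#s) else 0) = (\<Sum>j\<in>{Suc i..<?L}. if w'!i \<noteq> y \<and> w'!j \<noteq> b then fs (take i w') [] * fs (drop (Suc i) (take j w')) [] * fs (drop (Suc j) w') s else 0)"
        by (simp add: e2 sum_distrib_left mult.assoc if_distrib cong: if_cong)
    qed
    also have "\<dots> = (\<Sum>j<?L. \<Sum>i<j. if w'!i \<noteq> y \<and> w'!j \<noteq> b then fs (take i w') [] * fs (drop (Suc i) (take j w')) [] * fs (drop (Suc j) w') s else 0)"
      by (rule nsw[symmetric])
    also have "\<dots> = (\<Sum>j<?L. if w'!j \<noteq> b then fs (y # take j w') [] * fs (drop (Suc j) w') s else 0)"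
    proof (intro sum.cong refl)
      fix j assume j: "j \<in> {..<?L}"
      have "(\<Sum>i<j. if w'!i \<noteq> y \<and> w'!j \<noteq> b then fs (take i w') [] * fs (drop (Suc i) (take j w')) [] * fs (drop (Suc j) w') s else 0)
         = (if w'!j \<noteq> b then (\<Sum>i<j. if w'!i \<noteq> y then fs (take i w') [] * fs (drop (Suc i) (take j w')) [] else 0) * fs (drop (Suc j) w') s else 0)"
        by (cases "w'!j \<noteq> b") (simp_all add: sum_distrib_right if_distrib_arg)
      also have "\<dots> = (if w'!j \<noteq> b then fs (y # take j w') [] * fs (drop (Suc j) w') s else 0)"
        using e3 j by simp
      finally show "(\<Sum>i<j. if w'!i \<noteq> y \<and> w'!j \<noteq> b then fs (take i w') [] * fs (drop (Suc i) (take j w')) [] * fs (drop (Suc j) w') s else 0) = (if w'!j \<noteq> b then fs (y # take j w') [] * fs (drop (Suc j) w') s else 0)" .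
    qed
    also have "(\<Sum>j<?L. if w'!j \<noteq> b then fs (y # take j w') [] * fs (drop (Suc j) w') s else 0) + (if b \<noteq> y then fs w' s else 0)
       = (\<Sum>j<length w. if w!j \<noteq> b then fs (take j w) [] * fs (drop (Suc j) w) s else 0)"
      unfolding Cons length_Cons sum.lessThan_Suc_shift take_Suc_Cons drop_Suc_Cons nth_Cons_Suc
      by (simp add: eq_commute)
    finally show ?thesis .
  qed
qed



abbreviation NC where "NC \<equiv> nc_star_pairings"

lemma NC_sub: "NC w \<subseteq> Pow ({..<length w} \<times> {..<length w})"
  unfolding nc_star_pairings_def by auto

lemma NC_finite: "finite (NC w)"
  by (rule finite_subset[OF NC_sub]) auto

lemma NC_elem_finite: "P \<in> NC w \<Longrightarrow> finite P"
  using NC_sub by (meson PowD finite_SigmaI finite_lessThan finite_subset subsetD)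

definition inn_part :: "nat \<Rightarrow> (nat \<times> nat) set \<Rightarrow> (nat \<times> nat) set" where
  "inn_part j P = (\<lambda>(a,b). (a - 1, b - 1)) ` {(a,b) \<in> P. 1 \<le> a \<and> b \<le> j}"
definition out_part :: "nat \<Rightarrow> (nat \<times> nat) set \<Rightarrow> (nat \<times> nat) set" where
  "out_part j P = (\<lambda>(a,b). (a - (j+2), b - (j+2))) ` {(a,b) \<in> P. j + 2 \<le> a}"

lemma S_struct:
  assumes P: "P \<in> NC (x#w)" and j: "(0, Suc j) \<in> P" and ab: "(a,b) \<in> P" and ne: "(a,b) \<noteq> (0, Suc j)"
  shows "(1 \<le> a \<and> a < b \<and> b \<le> j) \<or> (j + 2 \<le> a \<and> a < b \<and> b < Suc (length w))"
proof -
  have sub: "P \<subseteq> {(i,j). i < j \<and> j < length (x#w)}"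
    and cov: "\<forall>k < length (x#w). \<exists>!q \<in> P. fst q = k \<or> snd q = k"
    and ncr: "\<forall>(a,b) \<in> P. \<forall>(c,d) \<in> P. \<not> (a < c \<and> c < b \<and> b < d)"
    using P unfolding nc_star_pairings_def by auto
  have ab1: "a < b" "b < Suc (length w)" using sub ab by auto
  have j1: "Suc j < Suc (length w)" using sub j by auto
  have "a \<noteq> 0"
  proof
    assume "a = 0"
    then have "fst (a,b) = 0 \<or> snd (a,b) = 0" by simp
    moreover have "fst (0::nat, Suc j) = 0 \<or> snd (0::nat, Suc j) = 0" by simp
    ultimately show False using cov[rule_format, of 0] ab j ne by (metis zero_less_Suc length_Cons)
  qed
  moreover have "a \<noteq> Suc j \<and> b \<noteq> Suc j"
  proof (rule ccontr)
    assume "\<not> ?thesis"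
    then have "fst (a,b) = Suc j \<or> snd (a,b) = Suc j" by auto
    moreover have "fst (0::nat, Suc j) = Suc j \<or> snd (0::nat, Suc j) = Suc j" by simp
    ultimately show False using cov[rule_format, of "Suc j"] ab j ne j1 by (metis length_Cons)
  qed
  moreover have "\<not> (a < Suc j \<and> Suc j < b)"
  proof -
    have "\<not> (0 < a \<and> a < Suc j \<and> Suc j < b)"
      using ncr j ab by blast
    then show ?thesis using \<open>a \<noteq> 0\<close> by simp
  qed
  ultimately show ?thesis using ab1 by auto
qed

lemma inner_NC:
  assumes P: "P \<in> NC (x#w)" and j: "(0, Suc j) \<in> P" and jl: "j < length w"
  shows "inn_part j P \<in> NC (take j w)"
proof -
  have sub: "P \<subseteq> {(i,j). i < j \<and> j < length (x#w)}"
    and cov: "\<forall>k < length (x#w). \<exists>!q \<in> P. fst q = k \<or> snd q = k"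
    and lt: "\<forall>(i,j) \<in> P. (x#w) ! i \<noteq> (x#w) ! j"
    and ncr: "\<forall>(a,b) \<in> P. \<forall>(c,d) \<in> P. \<not> (a < c \<and> c < b \<and> b < d)"
    using P unfolding nc_star_pairings_def by auto
  have lj: "length (take j w) = j" using jl by simp
  have in_iff: "(c,d) \<in> inn_part j P \<longleftrightarrow> (Suc c, Suc d) \<in> P \<and> Suc d \<le> j" for c d
  proof
    assume "(c,d) \<in> inn_part j P"
    then obtain a b where "(a,b) \<in> P" "1 \<le> a" "b \<le> j" "c = a - 1" "d = b - 1"
      unfolding inn_part_def by auto
    moreover have "a < b" using sub \<open>(a,b) \<in> P\<close> by auto
    ultimately show "(Suc c, Suc d) \<in> P \<and> Suc d \<le> j" by (auto simp: Suc_diff_1)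
  next
    assume "(Suc c, Suc d) \<in> P \<and> Suc d \<le> j"
    then show "(c,d) \<in> inn_part j P" unfolding inn_part_def
      by (intro image_eqI[of _ _ "(Suc c, Suc d)"]) auto
  qed
  have A: "inn_part j P \<subseteq> {(i,k). i < k \<and> k < length (take j w)}"
  proof
    fix q assume "q \<in> inn_part j P"
    then obtain c d where q: "q = (c,d)" and "(Suc c, Suc d) \<in> P" "Suc d \<le> j" using in_iff by (cases q) auto
    then show "q \<in> {(i,k). i < k \<and> k < length (take j w)}" using sub lj by auto
  qed
  have B: "\<forall>k < length (take j w). \<exists>!q \<in> inn_part j P. fst q = k \<or> snd q = k"
  proof (intro allI impI)
    fix k assume k: "k < length (take j w)"
    then have k': "Suc k < length (x#w)" using lj jl by simp
    obtain q0 where q0: "q0 \<in> P" "fst q0 = Suc k \<or> snd q0 = Suc k"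
      and un: "\<And>q. q \<in> P \<Longrightarrow> fst q = Suc k \<or> snd q = Suc k \<Longrightarrow> q = q0"
      using cov k' by metis
    obtain a b where ab: "q0 = (a,b)" by (cases q0)
    have "(a,b) \<noteq> (0, Suc j)" using q0 ab k lj by auto
    then have "(1 \<le> a \<and> a < b \<and> b \<le> j) \<or> (j + 2 \<le> a \<and> a < b \<and> b < Suc (length w))"
      using S_struct[OF P j] q0 ab by blast
    then have ins: "1 \<le> a \<and> a < b \<and> b \<le> j" using q0 ab k lj by auto
    show "\<exists>!q \<in> inn_part j P. fst q = k \<or> snd q = k"
    proof
      show "(a - 1, b - 1) \<in> inn_part j P \<and> (fst (a-1,b-1) = k \<or> snd (a-1,b-1) = k)"
        using in_iff[of "a-1" "b-1"] ins q0 ab by auto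
    next
      fix q assume "q \<in> inn_part j P \<and> (fst q = k \<or> snd q = k)"
      then obtain c d where q: "q = (c,d)" "(Suc c, Suc d) \<in> P" "Suc d \<le> j" "c = k \<or> d = k"
        using in_iff by (cases q) auto
      then have "(Suc c, Suc d) = (a,b)" using un[of "(Suc c, Suc d)"] ab by auto
      then show "q = (a-1, b-1)" using q by auto
    qed
  qed
  have C: "\<forall>(i,k) \<in> inn_part j P. take j w ! i \<noteq> take j w ! k"
  proof (intro ballI, clarify)
    fix c d assume cd: "(c,d) \<in> inn_part j P" and eq: "take j w ! c = take j w ! d"
    then have cd': "(Suc c, Suc d) \<in> P" "Suc d \<le> j" using in_iff by auto
    moreover have "c < d" using cd' sub by auto
    ultimately have "take j w ! c = w ! c" "take j w ! d = w ! d" by auto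
    then show False using lt cd' eq by auto
  qed
  have D: "\<forall>(a,b) \<in> inn_part j P. \<forall>(c,d) \<in> inn_part j P. \<not> (a < c \<and> c < b \<and> b < d)"
  proof (intro ballI, clarify)
    fix a b c d assume "(a,b) \<in> inn_part j P" "(c,d) \<in> inn_part j P" "a < c" "c < b" "b < d"
    then show False using in_iff ncr by fastforce
  qed
  show ?thesis unfolding nc_star_pairings_def using A B C D by blast
qed

lemma outer_NC:
  assumes P: "P \<in> NC (x#w)" and j: "(0, Suc j) \<in> P" and jl: "j < length w"
  shows "out_part j P \<in> NC (drop (Suc j) w)"
proof -
  have sub: "P \<subseteq> {(i,j). i < j \<and> j < length (x#w)}"
    and cov: "\<forall>k < length (x#w). \<exists>!q \<in> P. fst q = k \<or> snd q = k"
    and lt: "\<forall>(i,j) \<in> P. (x#w) ! i \<noteq> (x#w) ! j"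
    and ncr: "\<forall>(a,b) \<in> P. \<forall>(c,d) \<in> P. \<not> (a < c \<and> c < b \<and> b < d)"
    using P unfolding nc_star_pairings_def by auto
  let ?o = "j + 2"
  have lj: "length (drop (Suc j) w) = length w - Suc j" by simp
  have in_iff: "(c,d) \<in> out_part j P \<longleftrightarrow> (c + ?o, d + ?o) \<in> P" for c d
  proof
    assume "(c,d) \<in> out_part j P"
    then obtain a b where "(a,b) \<in> P" "?o \<le> a" "c = a - ?o" "d = b - ?o"
      unfolding out_part_def by auto
    moreover have "a < b" using sub \<open>(a,b) \<in> P\<close> by auto
    ultimately have "c + ?o = a" "d + ?o = b" by arith+
    then show "(c + ?o, d + ?o) \<in> P" using \<open>(a,b) \<in> P\<close> by simp
  next
    assume "(c + ?o, d + ?o) \<in> P"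
    then show "(c,d) \<in> out_part j P" unfolding out_part_def
      by (intro image_eqI[of _ _ "(c + ?o, d + ?o)"]) auto
  qed
  have A: "out_part j P \<subseteq> {(i,k). i < k \<and> k < length (drop (Suc j) w)}"
  proof
    fix q assume "q \<in> out_part j P"
    then obtain c d where q: "q = (c,d)" and "(c + ?o, d + ?o) \<in> P" using in_iff by (cases q) auto
    then show "q \<in> {(i,k). i < k \<and> k < length (drop (Suc j) w)}" using sub lj by auto
  qed
  have B: "\<forall>k < length (drop (Suc j) w). \<exists>!q \<in> out_part j P. fst q = k \<or> snd q = k"
  proof (intro allI impI)
    fix k assume k: "k < length (drop (Suc j) w)"
    then have k': "k + ?o < length (x#w)" using lj jl by simp
    define kk where "kk = k + ?o"
    have "\<exists>!q \<in> P. fst q = kk \<or> snd q = kk" using cov k' unfolding kk_def by blast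
    then obtain q0 where q0: "q0 \<in> P" "fst q0 = kk \<or> snd q0 = kk"
      and un: "\<And>q. q \<in> P \<Longrightarrow> fst q = kk \<or> snd q = kk \<Longrightarrow> q = q0"
      by blast
    obtain a b where ab: "q0 = (a,b)" by (cases q0)
    have qq: "a = k + ?o \<or> b = k + ?o" using q0 ab unfolding kk_def by simp
    have "(a,b) \<noteq> (0, Suc j)" using qq by auto
    then have "(1 \<le> a \<and> a < b \<and> b \<le> j) \<or> (j + 2 \<le> a \<and> a < b \<and> b < Suc (length w))"
      using S_struct[OF P j] q0 ab by blast
    then have ins: "j + 2 \<le> a \<and> a < b" using qq by linarith
    show "\<exists>!q \<in> out_part j P. fst q = k \<or> snd q = k"
    proof
      show "(a - ?o, b - ?o) \<in> out_part j P \<and> (fst (a - ?o, b - ?o) = k \<or> snd (a - ?o, b - ?o) = k)"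
      proof -
        have e: "a - ?o + ?o = a" "b - ?o + ?o = b" using ins by arith+
        have "(a - ?o + ?o, b - ?o + ?o) \<in> P" using q0(1) ab by (simp only: e)
        then have "(a - ?o, b - ?o) \<in> out_part j P" using in_iff by blast
        moreover have "a - ?o = k \<or> b - ?o = k" using qq by arith
        ultimately show ?thesis by simp
      qed
    next
      fix q assume "q \<in> out_part j P \<and> (fst q = k \<or> snd q = k)"
      then obtain c d where q: "q = (c,d)" "(c + ?o, d + ?o) \<in> P" "c = k \<or> d = k"
        using in_iff by (cases q) auto
      then have "(c + ?o, d + ?o) = (a,b)" using un[of "(c + ?o, d + ?o)"] ab unfolding kk_def by auto
      then have "c = a - ?o" "d = b - ?o" by auto
      then show "q = (a - ?o, b - ?o)" using q by simp
    qed
  qed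
  have C: "\<forall>(i,k) \<in> out_part j P. drop (Suc j) w ! i \<noteq> drop (Suc j) w ! k"
  proof (intro ballI, clarify)
    fix c d assume cd: "(c,d) \<in> out_part j P" and eq: "drop (Suc j) w ! c = drop (Suc j) w ! d"
    then have cd': "(c + ?o, d + ?o) \<in> P" using in_iff by auto
    then have "c < d" "d + ?o < Suc (length w)" using sub by auto
    then have "drop (Suc j) w ! c = (x#w) ! (c + ?o)" "drop (Suc j) w ! d = (x#w) ! (d + ?o)"
      using jl by (auto simp: nth_drop add.commute)
    then show False using lt cd' eq by auto
  qed
  have D: "\<forall>(a,b) \<in> out_part j P. \<forall>(c,d) \<in> out_part j P. \<not> (a < c \<and> c < b \<and> b < d)"
  proof (intro ballI, clarify)
    fix a b c d assume "(a,b) \<in> out_part j P" "(c,d) \<in> out_part j P" "a < c" "c < b" "b < d"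
    then have "(a + ?o, b + ?o) \<in> P" "(c + ?o, d + ?o) \<in> P" using in_iff by auto
    then have "\<not> (a + ?o < c + ?o \<and> c + ?o < b + ?o \<and> b + ?o < d + ?o)" using ncr by blast
    then show False using \<open>a < c\<close> \<open>c < b\<close> \<open>b < d\<close> by simp
  qed
  show ?thesis unfolding nc_star_pairings_def using A B C D by blast
qed

lemma inner_outer_inj:
  assumes P1: "P1 \<in> NC (x#w)" and j1: "(0, Suc j) \<in> P1"
    and P2: "P2 \<in> NC (x#w)" and j2: "(0, Suc j) \<in> P2"
    and i: "inn_part j P1 = inn_part j P2" and o: "out_part j P1 = out_part j P2"
  shows "P1 \<subseteq> P2"
proof
  fix q assume q: "q \<in> P1"
  obtain a b where ab: "q = (a,b)" by (cases q)
  show "q \<in> P2"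
  proof (cases "q = (0, Suc j)")
    case True then show ?thesis using j2 by simp
  next
    case False
    then have "(1 \<le> a \<and> a < b \<and> b \<le> j) \<or> (j + 2 \<le> a \<and> a < b \<and> b < Suc (length w))"
      using S_struct[OF P1 j1] q ab by blast
    then show ?thesis
    proof
      assume h: "1 \<le> a \<and> a < b \<and> b \<le> j"
      then have "(a - 1, b - 1) \<in> inn_part j P1" unfolding inn_part_def using q ab by force
      then have "(a - 1, b - 1) \<in> inn_part j P2" using i by simp
      then obtain a' b' where "(a',b') \<in> P2" "1 \<le> a'" "a' - 1 = a - 1" "b' - 1 = b - 1"
        unfolding inn_part_def by auto
      moreover have "a' < b'" using P2 \<open>(a',b') \<in> P2\<close> unfolding nc_star_pairings_def by auto
      ultimately have "a' = a" "b' = b" using h by arith+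
      then show ?thesis using \<open>(a',b') \<in> P2\<close> ab by simp
    next
      assume h: "j + 2 \<le> a \<and> a < b \<and> b < Suc (length w)"
      then have "(a - (j+2), b - (j+2)) \<in> out_part j P1" unfolding out_part_def using q ab by force
      then have "(a - (j+2), b - (j+2)) \<in> out_part j P2" using o by simp
      then obtain a' b' where "(a',b') \<in> P2" "j + 2 \<le> a'" "a' - (j+2) = a - (j+2)" "b' - (j+2) = b - (j+2)"
        unfolding out_part_def by auto
      moreover have "a' < b'" using P2 \<open>(a',b') \<in> P2\<close> unfolding nc_star_pairings_def by auto
      ultimately have "a' = a" "b' = b" using h by arith+
      then show ?thesis using \<open>(a',b') \<in> P2\<close> ab by simp
    qed
  qed
qed

lemma NC_first:
  assumes P: "P \<in> NC (x#w)"
  shows "\<exists>j < length w. w!j \<noteq> x \<and> (0, Suc j) \<in> P"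
proof -
  have sub: "P \<subseteq> {(i,j). i < j \<and> j < length (x#w)}"
    and cov: "\<forall>k < length (x#w). \<exists>!q \<in> P. fst q = k \<or> snd q = k"
    and lt: "\<forall>(i,j) \<in> P. (x#w) ! i \<noteq> (x#w) ! j"
    using P unfolding nc_star_pairings_def by auto
  have "\<exists>!q \<in> P. fst q = 0 \<or> snd q = 0" using cov by simp
  then obtain q where q: "q \<in> P" "fst q = 0 \<or> snd q = 0" by blast
  obtain a b where ab: "q = (a,b)" by (cases q)
  have "a < b" "b < Suc (length w)" using sub q ab by auto
  then have "a = 0" "b \<noteq> 0" using q ab by simp_all
  then obtain j where "b = Suc j" using not0_implies_Suc by blast
  moreover have "(x#w)!a \<noteq> (x#w)!b" using lt q ab by auto
  ultimately have "j < length w" "w!j \<noteq> x" "(0, Suc j) \<in> P" using \<open>b < Suc (length w)\<close> q ab \<open>a = 0\<close> by auto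
  then show ?thesis by blast
qed

lemma NC_card_decomp:
  "card (NC (x#w)) \<le> (\<Sum>j<length w. if w!j \<noteq> x then card (NC (take j w)) * card (NC (drop (Suc j) w)) else 0)"
proof -
  let ?J = "{j. j < length w \<and> w!j \<noteq> x}"
  let ?S = "\<lambda>j. {P \<in> NC (x#w). (0, Suc j) \<in> P}"
  have "NC (x#w) = (\<Union>j\<in>?J. ?S j)" using NC_first by blast
  then have "card (NC (x#w)) \<le> (\<Sum>j\<in>?J. card (?S j))"
  proof -
    have "finite ?J" by simp
    then show ?thesis using card_UN_le[of ?J ?S] \<open>NC (x#w) = _\<close> by simp
  qed
  also have "\<dots> \<le> (\<Sum>j\<in>?J. card (NC (take j w)) * card (NC (drop (Suc j) w)))"
  proof (rule sum_mono)
    fix j assume j: "j \<in> ?J"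
    have "card (?S j) \<le> card (NC (take j w) \<times> NC (drop (Suc j) w))"
    proof (rule card_inj_on_le[where f = "\<lambda>P. (inn_part j P, out_part j P)"])
      show "inj_on (\<lambda>P. (inn_part j P, out_part j P)) (?S j)"
      proof (rule inj_onI)
        fix P1 P2 assume "P1 \<in> ?S j" "P2 \<in> ?S j" "(inn_part j P1, out_part j P1) = (inn_part j P2, out_part j P2)"
        then show "P1 = P2" using inner_outer_inj[of P1 x w j P2] inner_outer_inj[of P2 x w j P1] by auto
      qed
      show "(\<lambda>P. (inn_part j P, out_part j P)) ` ?S j \<subseteq> NC (take j w) \<times> NC (drop (Suc j) w)"
        using inner_NC outer_NC j by auto
      show "finite (NC (take j w) \<times> NC (drop (Suc j) w))" using NC_finite by auto
    qed
    then show "card (?S j) \<le> card (NC (take j w)) * card (NC (drop (Suc j) w))"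
      by (simp add: card_cartesian_product)
  qed
  also have "\<dots> = (\<Sum>j<length w. if w!j \<noteq> x then card (NC (take j w)) * card (NC (drop (Suc j) w)) else 0)"
    by (simp add: sum.If_cases lessThan_def Collect_conj_eq Int_commute)
  finally show ?thesis .
qed

lemma NC_nil: "card (NC []) \<le> 1"
proof -
  have "NC [] \<subseteq> {{}}" unfolding nc_star_pairings_def by auto
  then show ?thesis using card_mono[of "{{}}" "NC []"] by simp
qed

lemma NC_le_fs: "card (NC w) \<le> fs w []"
proof (induction "length w" arbitrary: w rule: less_induct)
  case less
  show ?case
  proof (cases w)
    case Nil then show ?thesis using NC_nil by simp
  next
    case (Cons x w')
    have "card (NC w) \<le> (\<Sum>j<length w'. if w'!j \<noteq> x then card (NC (take j w')) * card (NC (drop (Suc j) w')) else 0)"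
      using NC_card_decomp Cons by simp
    also have "\<dots> \<le> (\<Sum>j<length w'. if w'!j \<noteq> x then fs (take j w') [] * fs (drop (Suc j) w') [] else 0)"
      using less Cons by (auto intro!: sum_mono mult_le_mono)
    also have "\<dots> = fs w' [x]" by (simp add: fs_decomp)
    also have "\<dots> = fs w []" using Cons by simp
    finally show ?thesis .
  qed
qed



lemma fs_T_push: "fs (replicate n True @ v) (replicate k True) = fs v (replicate (n+k) True)"
proof (induction n arbitrary: k)
  case (Suc n)
  have c: "(case replicate k True of [] \<Rightarrow> 0 | y#s' \<Rightarrow> if y \<noteq> True then fs (replicate n True @ v) s' else 0) = 0"
    by (cases k) auto
  have "fs (replicate (Suc n) True @ v) (replicate k True) = fs (replicate n True @ v) (replicate (Suc k) True)"
    using c by simp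
  also have "\<dots> = fs v (replicate (n + Suc k) True)" using Suc.IH by blast
  finally show ?case by simp
qed simp

lemma fs_F_F: "fs (replicate m False) (False # s) = 0"
  by (induction m arbitrary: s) auto

lemma fs_F_T: "fs (replicate m False) (replicate k True) = (if m = k then 1 else 0)"
proof (induction m arbitrary: k)
  case 0 then show ?case by simp
next
  case (Suc m)
  show ?case
  proof (cases k)
    case 0 then show ?thesis by (simp add: fs_F_F)
  next
    case (Suc k') then show ?thesis using Suc.IH by (simp add: fs_F_F)
  qed
qed

lemma fs_TF: "fs (replicate n True @ replicate m False) [] = (if n = m then 1 else 0)"
  using fs_T_push[of n "replicate m False" 0] fs_F_T[of m n] by auto

lemma NC_TF_mem: "{(i, 2*n - 1 - i) | i. i < n} \<in> NC (replicate n True @ replicate n False)"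
proof -
  let ?w = "replicate n True @ replicate n False"
  let ?P = "{(i, 2*n - 1 - i) | i. i < n}"
  have nth: "?w ! i = (i < n)" if "i < 2*n" for i
    using that by (auto simp: nth_append)
  have A: "?P \<subseteq> {(i,j). i < j \<and> j < length ?w}" by auto
  have B: "\<forall>k < length ?w. \<exists>!q \<in> ?P. fst q = k \<or> snd q = k"
  proof (intro allI impI)
    fix k assume k: "k < length ?w"
    show "\<exists>!q \<in> ?P. fst q = k \<or> snd q = k"
    proof (cases "k < n")
      case True
      show ?thesis
      proof
        show "(k, 2*n-1-k) \<in> ?P \<and> (fst (k, 2*n-1-k) = k \<or> snd (k, 2*n-1-k) = k)" using True by auto
      next
        fix q assume "q \<in> ?P \<and> (fst q = k \<or> snd q = k)"
        then show "q = (k, 2*n-1-k)" using True by auto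
      qed
    next
      case False
      show ?thesis
      proof
        show "(2*n-1-k, k) \<in> ?P \<and> (fst (2*n-1-k, k) = k \<or> snd (2*n-1-k, k) = k)"
          using False k by (auto intro!: exI[of _ "2*n-1-k"])
      next
        fix q assume "q \<in> ?P \<and> (fst q = k \<or> snd q = k)"
        then show "q = (2*n-1-k, k)" using False k by auto
      qed
    qed
  qed
  have C: "\<forall>(i,j) \<in> ?P. ?w ! i \<noteq> ?w ! j" using nth by auto
  have D: "\<forall>(a,b) \<in> ?P. \<forall>(c,d) \<in> ?P. \<not> (a < c \<and> c < b \<and> b < d)" by auto
  show ?thesis unfolding nc_star_pairings_def using A B C D by blast
qed

lemma NC_TF: "card (NC (replicate n True @ replicate m False)) = (if n = m then 1 else 0)"
proof -
  have le: "card (NC (replicate n True @ replicate m False)) \<le> (if n = m then 1 else 0)"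
    using NC_le_fs[of "replicate n True @ replicate m False"] fs_TF by simp
  show ?thesis
  proof (cases "n = m")
    case True
    then have "NC (replicate n True @ replicate m False) \<noteq> {}" using NC_TF_mem by blast
    then have "card (NC (replicate n True @ replicate m False)) \<noteq> 0" using NC_finite by simp
    then show ?thesis using le True by simp
  next
    case False then show ?thesis using le by simp
  qed
qed



definition Mop :: "bool \<Rightarrow> (bool list \<Rightarrow> real) \<Rightarrow> bool list \<Rightarrow> real" where
  "Mop x \<phi> s = \<phi> (x#s) + (case s of [] \<Rightarrow> 0 | y#s' \<Rightarrow> if y \<noteq> x then \<phi> s' else 0)"

definition del0 :: "bool list \<Rightarrow> real" where "del0 s = (if s = [] then 1 else 0)"

lemma fs_foldr: "real (fs w s) = foldr Mop w del0 s"
proof (induction w arbitrary: s)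
  case Nil then show ?case by (simp add: del0_def)
next
  case (Cons x w)
  show ?case by (cases s) (auto simp: Mop_def Cons.IH)
qed

lemma Mpow: "((Mop x ^^ n) \<phi>) s = (\<Sum>j\<le>n. if s = replicate j (\<not>x) @ drop j s then \<phi> (replicate (n-j) x @ drop j s) else 0)"
proof (induction n arbitrary: s)
  case 0 then show ?case by simp
next
  case (Suc n)
  have p1: "((Mop x ^^ n) \<phi>) (x#s) = \<phi> (replicate (Suc n) x @ s)"
  proof -
    have "((Mop x ^^ n) \<phi>) (x#s) = (\<Sum>j\<le>n. if x#s = replicate j (\<not>x) @ drop j (x#s) then \<phi> (replicate (n-j) x @ drop j (x#s)) else 0)"
      by (rule Suc.IH)
    also have "\<dots> = \<phi> (replicate n x @ x # s)"
      by (simp add: sum.atMost_shift)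
    finally show ?thesis by (simp add: replicate_app_Cons_same)
  qed
  have p2: "(case s of [] \<Rightarrow> 0 | y#s' \<Rightarrow> if y \<noteq> x then ((Mop x ^^ n) \<phi>) s' else 0)
     = (\<Sum>j\<le>n. if s = replicate (Suc j) (\<not>x) @ drop (Suc j) s then \<phi> (replicate (n-j) x @ drop (Suc j) s) else 0)"
  proof (cases s)
    case Nil then show ?thesis by simp
  next
    case (Cons y s')
    show ?thesis
    proof (cases "y = x")
      case True then show ?thesis using Cons by simp
    next
      case False
      then have "y = (\<not>x)" by auto
      have d: "\<And>j. drop (Suc j) (y # s') = drop j s'" by simp
      have r: "\<And>j. (y#s' = replicate (Suc j) (\<not>x) @ drop (Suc j) (y#s')) = (s' = replicate j (\<not>x) @ drop j s')"
        using \<open>y = (\<not>x)\<close> by simp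
      show ?thesis unfolding Cons d r using Suc.IH[of s'] \<open>y = (\<not>x)\<close> by simp
    qed
  qed
  have "((Mop x ^^ Suc n) \<phi>) s = ((Mop x ^^ n) \<phi>) (x#s) + (case s of [] \<Rightarrow> 0 | y#s' \<Rightarrow> if y \<noteq> x then ((Mop x ^^ n) \<phi>) s' else 0)"
    by (simp add: Mop_def)
  also have "\<dots> = (\<Sum>j\<le>Suc n. if s = replicate j (\<not>x) @ drop j s then \<phi> (replicate (Suc n-j) x @ drop j s) else 0)"
    unfolding p1 p2 sum.atMost_Suc_shift diff_Suc_Suc by simp
  finally show ?case .
qed

definition SS :: "nat \<Rightarrow> bool list set" where "SS D = {s. length s \<le> D}"

lemma SS_finite[simp]: "finite (SS D)"
proof -
  have "SS D = {xs. set xs \<subseteq> UNIV \<and> length xs \<le> D}" unfolding SS_def by simp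
  then show ?thesis using finite_lists_length_le[of "UNIV::bool set" D] by simp
qed

lemma SS_mono: "D \<le> D' \<Longrightarrow> SS D \<subseteq> SS D'" unfolding SS_def by auto

lemma L2_mono_set: "finite B \<Longrightarrow> A \<subseteq> B \<Longrightarrow> L2_set f A \<le> L2_set f B"
  unfolding L2_set_def by (intro real_sqrt_le_mono sum_mono2) auto

lemma L2_SS_mono: "D \<le> D' \<Longrightarrow> L2_set f (SS D) \<le> L2_set f (SS D')"
  by (rule L2_mono_set) (auto simp: SS_mono)

lemma reidx:
  assumes "inj_on h A" "h ` A \<subseteq> B" "finite B"
  shows "(\<Sum>s\<in>A. (\<phi> (h s))\<^sup>2) \<le> (\<Sum>v\<in>B. (\<phi> v :: real)\<^sup>2)"
proof -
  have "(\<Sum>s\<in>A. (\<phi> (h s))\<^sup>2) = (\<Sum>v\<in>h ` A. (\<phi> v)\<^sup>2)"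
    using sum.reindex[OF assms(1), of "\<lambda>v. (\<phi> v)\<^sup>2"] by simp
  also have "\<dots> \<le> (\<Sum>v\<in>B. (\<phi> v)\<^sup>2)" using assms by (intro sum_mono2) auto
  finally show ?thesis .
qed

lemma L2_sum_le: "finite J \<Longrightarrow> L2_set (\<lambda>s. \<Sum>j\<in>J. f j s) A \<le> (\<Sum>j\<in>J. L2_set (f j) A)"
proof (induction J rule: finite_induct)
  case empty then show ?case by (simp add: L2_set_def)
next
  case (insert j J)
  have "L2_set (\<lambda>s. \<Sum>i\<in>insert j J. f i s) A = L2_set (\<lambda>s. f j s + (\<Sum>i\<in>J. f i s)) A"
    using insert by simp
  also have "\<dots> \<le> L2_set (f j) A + L2_set (\<lambda>s. \<Sum>i\<in>J. f i s) A" by (rule L2_set_triangle_ineq)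
  finally show ?case using insert by simp
qed

lemma sum_if_sq: "finite A \<Longrightarrow> (\<Sum>s\<in>A. (if P s then g s else 0)\<^sup>2) = (\<Sum>s\<in>A \<inter> {s. P s}. ((g s)::real)\<^sup>2)"
proof -
  assume "finite A"
  have "(\<Sum>s\<in>A. (if P s then g s else 0)\<^sup>2) = (\<Sum>s\<in>A. if P s then (g s)\<^sup>2 else 0)"
    by (intro sum.cong) auto
  also have "\<dots> = (\<Sum>s\<in>{s\<in>A. P s}. (g s)\<^sup>2)" using \<open>finite A\<close> by (simp add: sum.inter_filter)
  finally show ?thesis by (simp add: Collect_conj_eq Int_commute)
qed

definition lead :: "bool \<Rightarrow> bool list \<Rightarrow> nat" where "lead x v = length (takeWhile (\<lambda>c. c = x) v)"

lemma inj_h: "inj_on (\<lambda>s. replicate m x @ drop j s) {s. s = replicate j y @ drop j s}"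
proof (rule inj_onI)
  fix s1 s2 assume "s1 \<in> {s. s = replicate j y @ drop j s}" "s2 \<in> {s. s = replicate j y @ drop j s}"
    "replicate m x @ drop j s1 = replicate m x @ drop j s2"
  then show "s1 = s2" by (metis (mono_tags, lifting) mem_Collect_eq same_append_eq)
qed

lemma Mpow_norm:
  "L2_set ((Mop x ^^ n) \<phi>) (SS D) \<le> 2 * sqrt (real n + 1) * L2_set \<phi> (SS (D + n))"
proof -
  let ?pre = "\<lambda>j s. s = replicate j (\<not>x) @ drop j s"
  let ?hx = "\<lambda>u. u \<noteq> [] \<and> hd u = x"
  let ?h = "\<lambda>j s. replicate (n-j) x @ drop j s"
  define Dg where "Dg j s = (if ?pre j s \<and> \<not> ?hx (drop j s) then \<phi> (?h j s) else 0)" for j s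
  define Of where "Of j s = (if ?pre j s \<and> ?hx (drop j s) then \<phi> (?h j s) else 0)" for j s
  let ?S = "SS D" and ?S' = "SS (D + n)"
  define E where "E r = (\<Sum>v\<in>?S' \<inter> {v. lead x v = r}. (\<phi> v)\<^sup>2)" for r
  have split: "((Mop x ^^ n) \<phi>) s = (\<Sum>j\<le>n. Dg j s) + (\<Sum>j\<le>n. Of j s)" for s
    unfolding Mpow Dg_def Of_def sum.distrib[symmetric] by (intro sum.cong) auto
  have lenh: "length (?h j s) \<le> D + n" if "s \<in> ?S" for j s
    using that unfolding SS_def by auto
  have Dg_le: "(L2_set (Dg j) ?S)\<^sup>2 \<le> E (n - j)" if j: "j \<le> n" for j
  proof -
    let ?A = "?S \<inter> {s. ?pre j s \<and> \<not> ?hx (drop j s)}"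
    have "(L2_set (Dg j) ?S)\<^sup>2 = (\<Sum>s\<in>?S. (Dg j s)\<^sup>2)" unfolding L2_set_def
      by (simp add: sum_nonneg)
    also have "\<dots> = (\<Sum>s\<in>?A. (\<phi> (?h j s))\<^sup>2)"
      unfolding Dg_def by (rule sum_if_sq) simp
    also have "\<dots> \<le> E (n - j)" unfolding E_def
    proof (rule reidx)
      show "inj_on (?h j) ?A" using inj_h[of "n-j" x j "\<not>x"] by (rule inj_on_subset) auto
      show "?h j ` ?A \<subseteq> ?S' \<inter> {v. lead x v = n - j}"
      proof
        fix v assume "v \<in> ?h j ` ?A"
        then obtain s where s: "s \<in> ?A" "v = ?h j s" by blast
        have "takeWhile (\<lambda>c. c = x) (drop j s) = []"
          using s(1) by (cases "drop j s") auto
        moreover have "takeWhile (\<lambda>c. c = x) (replicate (n-j) x @ drop j s) = replicate (n-j) x @ takeWhile (\<lambda>c. c = x) (drop j s)"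
          by (rule takeWhile_append2) auto
        ultimately have "lead x v = n - j" using s(2) unfolding lead_def by simp
        moreover have "v \<in> ?S'" using lenh s unfolding SS_def by auto
        ultimately show "v \<in> ?S' \<inter> {v. lead x v = n - j}" by simp
      qed
      show "finite (?S' \<inter> {v. lead x v = n - j})" by simp
    qed
    finally show ?thesis .
  qed
  have sumE: "(\<Sum>j\<le>n. E (n - j)) \<le> (L2_set \<phi> ?S')\<^sup>2"
  proof -
    have "(\<Sum>j\<le>n. E (n - j)) = (\<Sum>r\<le>n. E r)"
      using sum.atLeastAtMost_rev[of "\<lambda>j. E (n - j)" 0 n] by (simp add: atLeast0AtMost)
    also have "\<dots> = (\<Sum>r\<le>n. \<Sum>v\<in>?S'. if lead x v = r then (\<phi> v)\<^sup>2 else 0)"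
      unfolding E_def by (simp add: sum.inter_restrict)
    also have "\<dots> = (\<Sum>v\<in>?S'. \<Sum>r\<le>n. if lead x v = r then (\<phi> v)\<^sup>2 else 0)"
      by (rule sum.swap)
    also have "\<dots> \<le> (\<Sum>v\<in>?S'. (\<phi> v)\<^sup>2)"
      by (intro sum_mono) (simp add: eq_commute[of "lead x _"])
    also have "\<dots> = (L2_set \<phi> ?S')\<^sup>2" unfolding L2_set_def by (simp add: sum_nonneg)
    finally show ?thesis .
  qed
  have part1: "L2_set (\<lambda>s. \<Sum>j\<le>n. Dg j s) ?S \<le> sqrt (real n + 1) * L2_set \<phi> ?S'"
  proof -
    have "L2_set (\<lambda>s. \<Sum>j\<le>n. Dg j s) ?S \<le> (\<Sum>j\<le>n. L2_set (Dg j) ?S)" by (rule L2_sum_le) simp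
    also have "\<dots> \<le> (\<Sum>j\<le>n. \<bar>1\<bar> * \<bar>sqrt (E (n-j))\<bar>)"
    proof (intro sum_mono)
      fix j assume "j \<in> {..n}"
      then have "(L2_set (Dg j) ?S)\<^sup>2 \<le> E (n - j)" using Dg_le by simp
      then have "L2_set (Dg j) ?S \<le> sqrt (E (n-j))" by (rule real_le_rsqrt)
      then show "L2_set (Dg j) ?S \<le> \<bar>1\<bar> * \<bar>sqrt (E (n-j))\<bar>" by simp
    qed
    also have "\<dots> \<le> L2_set (\<lambda>_. 1) {..n} * L2_set (\<lambda>j. sqrt (E (n-j))) {..n}"
      by (rule L2_set_mult_ineq)
    also have "L2_set (\<lambda>_. 1) {..n} = sqrt (real n + 1)"
      by (simp add: L2_set_constant)
    also have "L2_set (\<lambda>j. sqrt (E (n-j))) {..n} = sqrt (\<Sum>j\<le>n. E (n - j))"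
      unfolding L2_set_def E_def by (simp add: sum_nonneg)
    also have "\<dots> \<le> L2_set \<phi> ?S'"
    proof -
      have "sqrt (\<Sum>j\<le>n. E (n - j)) \<le> sqrt ((L2_set \<phi> ?S')\<^sup>2)" by (rule real_sqrt_le_mono[OF sumE])
      then show ?thesis by simp
    qed
    finally show ?thesis by (simp add: mult_left_mono)
  qed
  have cross: "Of i s * Of j s = 0" if "i \<noteq> j" for i j s
  proof (rule ccontr)
    assume "Of i s * Of j s \<noteq> 0"
    then have pi: "?pre i s" "?hx (drop i s)" and pj: "?pre j s" "?hx (drop j s)"
      unfolding Of_def by (auto split: if_splits)
    show False
    proof (cases "i < j")
      case True
      have "i < length s" using pi(2) by simp
      then have "s ! i = x" using pi(2) by (simp add: hd_drop_conv_nth)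
      moreover have "s ! i = (replicate j (\<not>x) @ drop j s) ! i" using pj(1) by (rule arg_cong)
      moreover have "(replicate j (\<not>x) @ drop j s) ! i = (\<not>x)" using True by (simp add: nth_append)
      ultimately show False by simp
    next
      case False
      then have ji: "j < i" using that by simp
      have "j < length s" using pj(2) by simp
      then have "s ! j = x" using pj(2) by (simp add: hd_drop_conv_nth)
      moreover have "s ! j = (replicate i (\<not>x) @ drop i s) ! j" using pi(1) by (rule arg_cong)
      moreover have "(replicate i (\<not>x) @ drop i s) ! j = (\<not>x)" using ji by (simp add: nth_append)
      ultimately show False by simp
    qed
  qed
  have sq: "(\<Sum>j\<le>n. Of j s)\<^sup>2 = (\<Sum>j\<le>n. (Of j s)\<^sup>2)" for s
  proof -
    have "(\<Sum>j\<le>n. Of j s)\<^sup>2 = (\<Sum>i\<le>n. \<Sum>j\<le>n. Of i s * Of j s)"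
      by (simp add: power2_eq_square sum_product)
    also have "\<dots> = (\<Sum>i\<le>n. \<Sum>j\<le>n. if j = i then (Of i s)\<^sup>2 else 0)"
      by (intro sum.cong refl) (auto simp: cross power2_eq_square)
    also have "\<dots> = (\<Sum>i\<le>n. (Of i s)\<^sup>2)" by simp
    finally show ?thesis .
  qed
  have Of_le: "(\<Sum>s\<in>?S. (Of j s)\<^sup>2) \<le> (L2_set \<phi> ?S')\<^sup>2" for j
  proof -
    let ?A = "?S \<inter> {s. ?pre j s \<and> ?hx (drop j s)}"
    have "(\<Sum>s\<in>?S. (Of j s)\<^sup>2) = (\<Sum>s\<in>?A. (\<phi> (?h j s))\<^sup>2)"
      unfolding Of_def by (rule sum_if_sq) simp
    also have "\<dots> \<le> (\<Sum>v\<in>?S'. (\<phi> v)\<^sup>2)"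
    proof (rule reidx)
      show "inj_on (?h j) ?A" using inj_h[of "n-j" x j "\<not>x"] by (rule inj_on_subset) auto
      show "?h j ` ?A \<subseteq> ?S'" using lenh unfolding SS_def by auto
    qed simp
    also have "\<dots> = (L2_set \<phi> ?S')\<^sup>2" unfolding L2_set_def by (simp add: sum_nonneg)
    finally show ?thesis .
  qed
  have part2: "L2_set (\<lambda>s. \<Sum>j\<le>n. Of j s) ?S \<le> sqrt (real n + 1) * L2_set \<phi> ?S'"
  proof -
    have "(L2_set (\<lambda>s. \<Sum>j\<le>n. Of j s) ?S)\<^sup>2 = (\<Sum>s\<in>?S. \<Sum>j\<le>n. (Of j s)\<^sup>2)"
      unfolding L2_set_def sq by (simp add: sum_nonneg)
    also have "\<dots> = (\<Sum>j\<le>n. \<Sum>s\<in>?S. (Of j s)\<^sup>2)" by (rule sum.swap)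
    also have "\<dots> \<le> (\<Sum>j\<le>n. (L2_set \<phi> ?S')\<^sup>2)" by (intro sum_mono Of_le)
    also have "\<dots> = (sqrt (real n + 1) * L2_set \<phi> ?S')\<^sup>2"
      by (simp add: power_mult_distrib)
    finally show ?thesis
      by (rule power2_le_imp_le) simp
  qed
  have "L2_set ((Mop x ^^ n) \<phi>) ?S = L2_set (\<lambda>s. (\<Sum>j\<le>n. Dg j s) + (\<Sum>j\<le>n. Of j s)) ?S"
    by (rule arg_cong[where f="\<lambda>f. L2_set f ?S"]) (rule ext, rule split)
  also have "\<dots> \<le> L2_set (\<lambda>s. \<Sum>j\<le>n. Dg j s) ?S + L2_set (\<lambda>s. \<Sum>j\<le>n. Of j s) ?S"
    by (rule L2_set_triangle_ineq)
  also have "\<dots> \<le> 2 * sqrt (real n + 1) * L2_set \<phi> ?S'" using part1 part2 by simp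
  finally show ?thesis .
qed

lemma Mop_lin: "finite I \<Longrightarrow> Mop x (\<lambda>s. \<Sum>i\<in>I. c i * g i s) s = (\<Sum>i\<in>I. c i * Mop x (g i) s)"
  unfolding Mop_def by (cases s) (auto simp: sum.distrib sum_distrib_left algebra_simps)

lemma Mpow_lin: "finite I \<Longrightarrow> (Mop x ^^ n) (\<lambda>s. \<Sum>i\<in>I. c i * g i s) s = (\<Sum>i\<in>I. c i * (Mop x ^^ n) (g i) s)"
proof (induction n arbitrary: s)
  case 0 then show ?case by simp
next
  case (Suc n)
  have "(Mop x ^^ Suc n) (\<lambda>s. \<Sum>i\<in>I. c i * g i s) = Mop x ((Mop x ^^ n) (\<lambda>s. \<Sum>i\<in>I. c i * g i s))" by simp
  also have "(Mop x ^^ n) (\<lambda>s. \<Sum>i\<in>I. c i * g i s) = (\<lambda>s. \<Sum>i\<in>I. c i * (Mop x ^^ n) (g i) s)"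
    using Suc by (intro ext) simp
  finally show ?case using Mop_lin[OF Suc.prems, of x c "\<lambda>i. (Mop x ^^ n) (g i)" s] by simp
qed

definition Gop :: "bool \<Rightarrow> (nat \<Rightarrow> real) \<Rightarrow> nat \<Rightarrow> (bool list \<Rightarrow> real) \<Rightarrow> bool list \<Rightarrow> real" where
  "Gop x b N \<phi> = (\<lambda>s. \<Sum>n\<le>N. b n * (Mop x ^^ n) \<phi> s)"

lemma Gop_norm:
  "L2_set (Gop x b N \<phi>) (SS D) \<le> (\<Sum>n\<le>N. \<bar>b n\<bar> * (2 * sqrt (real n + 1))) * L2_set \<phi> (SS (D + N))"
proof -
  have "L2_set (Gop x b N \<phi>) (SS D) \<le> (\<Sum>n\<le>N. L2_set (\<lambda>s. b n * (Mop x ^^ n) \<phi> s) (SS D))"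
    unfolding Gop_def by (rule L2_sum_le) simp
  also have "\<dots> \<le> (\<Sum>n\<le>N. \<bar>b n\<bar> * (2 * sqrt (real n + 1)) * L2_set \<phi> (SS (D + N)))"
  proof (intro sum_mono)
    fix n assume n: "n \<in> {..N}"
    have "L2_set (\<lambda>s. b n * (Mop x ^^ n) \<phi> s) (SS D) = \<bar>b n\<bar> * L2_set ((Mop x ^^ n) \<phi>) (SS D)"
      unfolding L2_set_def by (simp add: power_mult_distrib real_sqrt_mult sum_distrib_left[symmetric])
    also have "\<dots> \<le> \<bar>b n\<bar> * (2 * sqrt (real n + 1) * L2_set \<phi> (SS (D + n)))"
      by (intro mult_left_mono Mpow_norm) simp
    also have "\<dots> \<le> \<bar>b n\<bar> * (2 * sqrt (real n + 1) * L2_set \<phi> (SS (D + N)))"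
      using n by (intro mult_left_mono L2_SS_mono) auto
    finally show "L2_set (\<lambda>s. b n * (Mop x ^^ n) \<phi> s) (SS D) \<le> \<bar>b n\<bar> * (2 * sqrt (real n + 1)) * L2_set \<phi> (SS (D + N))"
      by (simp add: mult.assoc)
  qed
  also have "\<dots> = (\<Sum>n\<le>N. \<bar>b n\<bar> * (2 * sqrt (real n + 1))) * L2_set \<phi> (SS (D + N))"
    by (simp add: sum_distrib_right)
  finally show ?thesis .
qed

definition TT :: "nat \<Rightarrow> nat \<Rightarrow> (nat \<times> nat) list set" where
  "TT N k = {xs. set xs \<subseteq> {..N} \<times> {..N} \<and> length xs = k}"

lemma TT_finite: "finite (TT N k)"
  unfolding TT_def by (rule finite_lists_length_eq) simp

lemma TT_Suc: "TT N (Suc k) = (\<lambda>(p,xs). p#xs) ` (({..N} \<times> {..N}) \<times> TT N k)"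
proof
  show "TT N (Suc k) \<subseteq> (\<lambda>(p,xs). p#xs) ` (({..N} \<times> {..N}) \<times> TT N k)"
  proof
    fix xs assume "xs \<in> TT N (Suc k)"
    then obtain p ys where "xs = p # ys" "p \<in> {..N} \<times> {..N}" "ys \<in> TT N k"
      unfolding TT_def by (auto simp: length_Suc_conv)
    then show "xs \<in> (\<lambda>(p,xs). p#xs) ` (({..N} \<times> {..N}) \<times> TT N k)" by force
  qed
  show "(\<lambda>(p,xs). p#xs) ` (({..N} \<times> {..N}) \<times> TT N k) \<subseteq> TT N (Suc k)"
    unfolding TT_def by auto
qed

lemma sum_TT_Suc: "(\<Sum>xs\<in>TT N (Suc k). f xs) = (\<Sum>p\<in>{..N} \<times> {..N}. \<Sum>ys\<in>TT N k. f (p # ys))"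
proof -
  have inj: "inj_on (\<lambda>(p,xs). p#xs) (({..N} \<times> {..N}) \<times> TT N k)" by (rule inj_onI) auto
  have "(\<Sum>xs\<in>TT N (Suc k). f xs) = (\<Sum>q\<in>({..N} \<times> {..N}) \<times> TT N k. f ((\<lambda>(p,xs). p#xs) q))"
    unfolding TT_Suc by (rule sum.reindex[OF inj, unfolded comp_def])
  also have "\<dots> = (\<Sum>p\<in>{..N} \<times> {..N}. \<Sum>ys\<in>TT N k. f (p # ys))"
    by (simp add: sum.cartesian_product split_def)
  finally show ?thesis .
qed

definition blk :: "nat \<times> nat \<Rightarrow> bool list" where "blk p = replicate (fst p) True @ replicate (snd p) False"

definition Wv :: "(nat \<Rightarrow> real) \<Rightarrow> nat \<Rightarrow> nat \<Rightarrow> bool list \<Rightarrow> real" where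
  "Wv b N k = ((\<lambda>\<phi>. Gop True b N (Gop False b N \<phi>)) ^^ k) del0"

lemma multilin:
  "(\<Sum>nms\<in>TT N k. (\<Prod>(n,m)\<leftarrow>nms. b n * b m) * real (fs (concat (map blk nms)) s)) = Wv b N k s"
proof (induction k arbitrary: s)
  case 0
  have "TT N 0 = {[]}" unfolding TT_def by auto
  then show ?case by (simp add: Wv_def fs_foldr del0_def)
next
  case (Suc k)
  have F: "real (fs (blk p @ concat (map blk ys)) s) = (Mop True ^^ fst p) ((Mop False ^^ snd p) (\<lambda>s. real (fs (concat (map blk ys)) s))) s" for p ys s
    unfolding fs_foldr by (simp add: blk_def foldr_replicate)
  have IH: "(\<lambda>s. \<Sum>ys\<in>TT N k. (\<Prod>(n,m)\<leftarrow>ys. b n * b m) * real (fs (concat (map blk ys)) s)) = Wv b N k"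
    using Suc.IH by (intro ext) simp
  have "(\<Sum>nms\<in>TT N (Suc k). (\<Prod>(n,m)\<leftarrow>nms. b n * b m) * real (fs (concat (map blk nms)) s))
      = (\<Sum>p\<in>{..N} \<times> {..N}. \<Sum>ys\<in>TT N k. (b (fst p) * b (snd p)) * ((\<Prod>(n,m)\<leftarrow>ys. b n * b m) * (Mop True ^^ fst p) ((Mop False ^^ snd p) (\<lambda>s. real (fs (concat (map blk ys)) s))) s))"
    unfolding sum_TT_Suc by (intro sum.cong refl) (auto simp: F split_def)
  also have "\<dots> = (\<Sum>p\<in>{..N} \<times> {..N}. (b (fst p) * b (snd p)) * (Mop True ^^ fst p) ((Mop False ^^ snd p) (Wv b N k)) s)"
  proof (intro sum.cong refl)
    fix p :: "nat \<times> nat"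
    have "(\<Sum>ys\<in>TT N k. (\<Prod>(n,m)\<leftarrow>ys. b n * b m) * (Mop True ^^ fst p) ((Mop False ^^ snd p) (\<lambda>s. real (fs (concat (map blk ys)) s))) s)
       = (Mop True ^^ fst p) (\<lambda>s'. \<Sum>ys\<in>TT N k. (\<Prod>(n,m)\<leftarrow>ys. b n * b m) * (Mop False ^^ snd p) (\<lambda>s. real (fs (concat (map blk ys)) s)) s') s"
      by (rule Mpow_lin[symmetric, OF TT_finite])
    also have "(\<lambda>s'. \<Sum>ys\<in>TT N k. (\<Prod>(n,m)\<leftarrow>ys. b n * b m) * (Mop False ^^ snd p) (\<lambda>s. real (fs (concat (map blk ys)) s)) s')
       = (Mop False ^^ snd p) (\<lambda>s. \<Sum>ys\<in>TT N k. (\<Prod>(n,m)\<leftarrow>ys. b n * b m) * real (fs (concat (map blk ys)) s))"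
      by (intro ext) (rule Mpow_lin[symmetric, OF TT_finite])
    finally show "(\<Sum>ys\<in>TT N k. (b (fst p) * b (snd p)) * ((\<Prod>(n,m)\<leftarrow>ys. b n * b m) * (Mop True ^^ fst p) ((Mop False ^^ snd p) (\<lambda>s. real (fs (concat (map blk ys)) s))) s))
       = (b (fst p) * b (snd p)) * (Mop True ^^ fst p) ((Mop False ^^ snd p) (Wv b N k)) s"
      unfolding IH by (simp add: sum_distrib_left[symmetric])
  qed
  also have "\<dots> = (\<Sum>n\<le>N. \<Sum>m\<le>N. b n * (b m * (Mop True ^^ n) ((Mop False ^^ m) (Wv b N k)) s))"
    by (simp add: sum.cartesian_product mult.assoc split_def)
  also have "\<dots> = Gop True b N (Gop False b N (Wv b N k)) s"
  proof -
    have "(Mop True ^^ n) (Gop False b N (Wv b N k)) s = (\<Sum>m\<le>N. b m * (Mop True ^^ n) ((Mop False ^^ m) (Wv b N k)) s)" for n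
      unfolding Gop_def by (rule Mpow_lin) simp
    then show ?thesis unfolding Gop_def by (simp add: sum_distrib_left)
  qed
  also have "\<dots> = Wv b N (Suc k) s" unfolding Wv_def by simp
  finally show ?case .
qed

lemma Mpow_nil: "((Mop x ^^ n) \<phi>) [] = \<phi> (replicate n x)"
  unfolding Mpow by (simp add: sum.atMost_shift)

lemma MF_del0: "((Mop False ^^ m) del0) s = (if s = replicate m True then 1 else 0)"
proof -
  have "((Mop False ^^ m) del0) s = (\<Sum>j\<le>m. if j = m \<and> s = replicate m True then 1 else 0)"
    unfolding Mpow
  proof (intro sum.cong refl)
    fix j assume j: "j \<in> {..m}"
    show "(if s = replicate j (\<not>False) @ drop j s then del0 (replicate (m-j) False @ drop j s) else 0)
        = (if j = m \<and> s = replicate m True then 1 else 0)"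
    proof (cases "j = m \<and> s = replicate m True")
      case True then show ?thesis by (simp add: del0_def)
    next
      case False
      then show ?thesis using j unfolding del0_def
        by (auto simp: append_eq_conv_conj)
    qed
  qed
  also have "\<dots> = (if s = replicate m True then 1 else 0)" by simp
  finally show ?thesis .
qed

lemma GF_del0: "Gop False b N del0 s = (if s = replicate (length s) True \<and> length s \<le> N then b (length s) else 0)"
proof -
  have "Gop False b N del0 s = (\<Sum>m\<le>N. if m = length s then (if s = replicate (length s) True then b m else 0) else 0)"
    unfolding Gop_def MF_del0 by (intro sum.cong refl) auto
  also have "\<dots> = (if s = replicate (length s) True \<and> length s \<le> N then b (length s) else 0)"
    by (simp add: sum.delta)
  finally show ?thesis .
qed

lemma GF_del0_norm: "L2_set (Gop False b N del0) (SS D) \<le> L2_set b {..N}"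
proof -
  have "(\<Sum>s\<in>SS D. (Gop False b N del0 s)\<^sup>2) = (\<Sum>s\<in>SS D \<inter> {s. s = replicate (length s) True \<and> length s \<le> N}. (b (length s))\<^sup>2)"
    unfolding GF_del0 by (rule sum_if_sq) simp
  also have "\<dots> \<le> (\<Sum>m\<in>{..N}. (b m)\<^sup>2)"
  proof (rule reidx)
    show "inj_on length (SS D \<inter> {s. s = replicate (length s) True \<and> length s \<le> N})"
      by (rule inj_onI) (metis (mono_tags, lifting) Int_iff mem_Collect_eq)
  qed auto
  finally show ?thesis unfolding L2_set_def by (rule real_sqrt_le_mono)
qed

definition Kc :: "(nat \<Rightarrow> real) \<Rightarrow> nat \<Rightarrow> real" where
  "Kc b N = (\<Sum>n\<le>N. \<bar>b n\<bar> * (2 * sqrt (real n + 1)))"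

lemma Kc_nonneg: "0 \<le> Kc b N" unfolding Kc_def by (intro sum_nonneg) simp

lemma Gop_norm': "L2_set (Gop x b N \<phi>) (SS D) \<le> Kc b N * L2_set \<phi> (SS (D + N))"
  using Gop_norm unfolding Kc_def .

lemma iter_norm: "L2_set (Gop False b N (Wv b N i)) (SS D) \<le> Kc b N ^ (2*i) * L2_set b {..N}"
proof (induction i arbitrary: D)
  case 0 then show ?case using GF_del0_norm by (simp add: Wv_def)
next
  case (Suc i)
  let ?K = "Kc b N"
  have eq: "Wv b N (Suc i) = Gop True b N (Gop False b N (Wv b N i))" unfolding Wv_def by simp
  have "L2_set (Gop False b N (Wv b N (Suc i))) (SS D) \<le> ?K * L2_set (Wv b N (Suc i)) (SS (D + N))"
    by (rule Gop_norm')
  also have "\<dots> \<le> ?K * (?K * L2_set (Gop False b N (Wv b N i)) (SS (D + N + N)))"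
    unfolding eq by (intro mult_left_mono Gop_norm' Kc_nonneg)
  also have "\<dots> \<le> ?K * (?K * (?K ^ (2*i) * L2_set b {..N}))"
    by (intro mult_left_mono Suc.IH Kc_nonneg)
  finally show ?case by (simp add: mult_ac power_add)
qed

lemma Wv_bound: "\<bar>Wv b N (Suc k) []\<bar> \<le> (L2_set b {..N})\<^sup>2 * Kc b N ^ (2*k)"
proof -
  let ?\<psi> = "Gop False b N (Wv b N k)"
  have "Wv b N (Suc k) [] = (\<Sum>n\<le>N. b n * ?\<psi> (replicate n True))"
    unfolding Wv_def by (simp add: Gop_def Mpow_nil)
  also have "\<bar>\<dots>\<bar> \<le> (\<Sum>n\<le>N. \<bar>b n\<bar> * \<bar>?\<psi> (replicate n True)\<bar>)"
    by (rule order_trans[OF sum_abs]) (simp add: abs_mult)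
  also have "\<dots> \<le> L2_set b {..N} * L2_set (\<lambda>n. ?\<psi> (replicate n True)) {..N}"
    by (rule L2_set_mult_ineq)
  also have "L2_set b {..N} * L2_set (\<lambda>n. ?\<psi> (replicate n True)) {..N} \<le> L2_set b {..N} * L2_set ?\<psi> (SS N)"
  proof (rule mult_left_mono[OF _ L2_set_nonneg])
    have "(\<Sum>n\<in>{..N}. (?\<psi> (replicate n True))\<^sup>2) \<le> (\<Sum>v\<in>SS N. (?\<psi> v)\<^sup>2)"
      by (rule reidx) (auto simp: inj_on_def SS_def[symmetric], auto simp: SS_def)
    then show "L2_set (\<lambda>n. ?\<psi> (replicate n True)) {..N} \<le> L2_set ?\<psi> (SS N)" unfolding L2_set_def by (rule real_sqrt_le_mono)
  qed
  also have "\<dots> \<le> L2_set b {..N} * (Kc b N ^ (2*k) * L2_set b {..N})" by (rule mult_left_mono[OF iter_norm L2_set_nonneg])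
  finally show ?thesis by (simp add: power2_eq_square mult_ac)
qed



lemma geo_closed:
  fixes r :: real
  shows "(\<Sum>n\<le>N. (real n + 1) * r^n) * (1 - r)\<^sup>2 = 1 - (real N + 2) * r^(N+1) + (real N + 1) * r^(N+2)"
proof (induction N)
  case 0 then show ?case by (simp add: power2_eq_square algebra_simps)
next
  case (Suc N)
  have "(\<Sum>n\<le>Suc N. (real n + 1) * r^n) * (1 - r)\<^sup>2 = (\<Sum>n\<le>N. (real n + 1) * r^n) * (1 - r)\<^sup>2 + (real N + 2) * r^(N+1) * (1-r)\<^sup>2"
    by (simp add: algebra_simps)
  also have "\<dots> = 1 - (real N + 2) * r^(N+1) + (real N + 1) * r^(N+2) + (real N + 2) * r^(N+1) * (1-r)\<^sup>2"
    using Suc by simp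
  also have "\<dots> = 1 - (real (Suc N) + 2) * r^(Suc N+1) + (real (Suc N) + 1) * r^(Suc N+2)"
    by (simp add: power2_eq_square algebra_simps)
  finally show ?case .
qed

lemma geo_bound:
  fixes r :: real
  assumes "0 \<le> r" "r < 1"
  shows "(\<Sum>n\<le>N. (real n + 1) * r^n) \<le> 1 / (1 - r)\<^sup>2"
proof -
  have "r^(N+2) \<le> r^(N+1)" using assms by (intro power_decreasing) auto
  then have "(real N + 1) * r^(N+2) \<le> (real N + 1) * r^(N+1)" by (simp add: mult_left_mono)
  moreover have "0 \<le> r^(N+1)" using assms by simp
  ultimately have "1 - (real N + 2) * r^(N+1) + (real N + 1) * r^(N+2) \<le> 1"
    by (simp add: algebra_simps)
  then have "(\<Sum>n\<le>N. (real n + 1) * r^n) * (1 - r)\<^sup>2 \<le> 1" using geo_closed by simp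
  moreover have "0 < (1 - r)\<^sup>2" using assms by simp
  ultimately show ?thesis by (simp add: field_simps)
qed

lemma exp_bound:
  fixes t :: real
  assumes "0 < t" "t < 1"
  shows "1 / (1 - exp (-2*t)) \<le> 3 / (2*t)"
proof -
  have "1 + 2*t \<le> exp (2*t)" by (rule exp_ge_add_one_self)
  then have "exp (-2*t) \<le> 1 / (1 + 2*t)"
    using assms by (simp add: exp_minus field_simps)
  then have "1 - exp (-2*t) \<ge> 2*t / (1 + 2*t)" using assms by (simp add: field_simps)
  moreover have "2*t / (1 + 2*t) \<ge> 2*t/3" using assms by (simp add: field_simps)
  ultimately have h: "1 - exp (-2*t) \<ge> 2*t/3" by linarith
  then have "0 < 1 - exp (-2*t)" using assms by linarith
  then show ?thesis using h assms by (simp add: field_simps)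
qed

lemma exp_sum_bound:
  fixes t :: real
  assumes "0 < t" "t < 1"
  shows "(\<Sum>n\<le>N. (exp (- real n * t) * sqrt (real n + 1))\<^sup>2) \<le> (3 / (2*t))\<^sup>2"
proof -
  let ?r = "exp (-2*t)"
  have "(exp (- real n * t) * sqrt (real n + 1))\<^sup>2 = (real n + 1) * ?r^n" for n
  proof -
    have "(exp (- real n * t))\<^sup>2 = exp (real n * (-2*t))"
      by (simp add: power2_eq_square exp_add[symmetric] algebra_simps)
    also have "\<dots> = ?r^n" by (rule exp_of_nat_mult)
    finally show ?thesis by (simp add: power_mult_distrib)
  qed
  then have "(\<Sum>n\<le>N. (exp (- real n * t) * sqrt (real n + 1))\<^sup>2) = (\<Sum>n\<le>N. (real n + 1) * ?r^n)" by simp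
  also have "\<dots> \<le> 1 / (1 - ?r)\<^sup>2" by (rule geo_bound) (use assms in auto)
  also have "\<dots> = (1 / (1 - ?r))\<^sup>2" by (simp add: power_divide)
  also have "\<dots> \<le> (3 / (2*t))\<^sup>2"
  proof (rule power_mono[OF exp_bound[OF assms]])
    have "?r < 1" using assms by simp
    then show "0 \<le> 1 / (1 - ?r)" by simp
  qed
  finally show ?thesis .
qed



lemma cmod_prod_list: "cmod (prod_list (map f xs)) = prod_list (map (\<lambda>x. cmod (f x)) xs)"
  by (induction xs) (auto simp: norm_mult)

lemma blk_eq: "(\<lambda>(n,m). replicate n True @ replicate m False) = blk"
  by (auto simp: blk_def)

lemma circ_moment_TT: "circ_moment k a N = (\<Sum>nms\<in>TT N k. (\<Prod>(n,m)\<leftarrow>nms. a n * cnj (a m)) * circ_trace_word (concat (map blk nms)))"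
  unfolding circ_moment_def TT_def blk_eq ..

lemma prod_nn: "0 \<le> (\<Prod>(n,m)\<leftarrow>nms. cmod (a n) * cmod (a m))"
  by (induction nms) auto

lemma term_abs:
  "cmod ((\<Prod>(n,m)\<leftarrow>nms. a n * cnj (a m)) * circ_trace_word (concat (map blk nms)))
     \<le> (\<Prod>(n,m)\<leftarrow>nms. cmod (a n) * cmod (a m)) * real (fs (concat (map blk nms)) [])"
proof -
  have "cmod ((\<Prod>(n,m)\<leftarrow>nms. a n * cnj (a m)) * circ_trace_word (concat (map blk nms)))
      = (\<Prod>(n,m)\<leftarrow>nms. cmod (a n) * cmod (a m)) * real (card (NC (concat (map blk nms))))"
    unfolding circ_trace_word_def norm_mult cmod_prod_list
    by (simp add: split_def norm_mult)
  also have "\<dots> \<le> (\<Prod>(n,m)\<leftarrow>nms. cmod (a n) * cmod (a m)) * real (fs (concat (map blk nms)) [])"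
    by (intro mult_left_mono) (auto simp: NC_le_fs prod_nn)
  finally show ?thesis .
qed

lemma S_le_Wv:
  "(\<Sum>nms\<in>TT N k. cmod ((\<Prod>(n,m)\<leftarrow>nms. a n * cnj (a m)) * circ_trace_word (concat (map blk nms))))
     \<le> Wv (\<lambda>n. cmod (a n)) N k []"
proof -
  have "(\<Sum>nms\<in>TT N k. cmod ((\<Prod>(n,m)\<leftarrow>nms. a n * cnj (a m)) * circ_trace_word (concat (map blk nms))))
     \<le> (\<Sum>nms\<in>TT N k. (\<Prod>(n,m)\<leftarrow>nms. cmod (a n) * cmod (a m)) * real (fs (concat (map blk nms)) []))"
    by (intro sum_mono term_abs)
  also have "\<dots> = Wv (\<lambda>n. cmod (a n)) N k []" by (rule multilin)
  finally show ?thesis .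
qed

lemma circ_moment_1: "circ_moment 1 a N = (\<Sum>n\<le>N. complex_of_real ((cmod (a n))\<^sup>2))"
proof -
  have TT1: "TT N 1 = (\<lambda>p. [p]) ` ({..N} \<times> {..N})"
    unfolding TT_def by (auto simp: length_Suc_conv)
  have "circ_moment 1 a N = (\<Sum>p\<in>{..N} \<times> {..N}. (a (fst p) * cnj (a (snd p))) * circ_trace_word (blk p))"
    unfolding circ_moment_TT TT1 by (subst sum.reindex) (auto simp: inj_on_def split_def)
  also have "\<dots> = (\<Sum>n\<le>N. \<Sum>m\<le>N. (a n * cnj (a m)) * circ_trace_word (blk (n,m)))"
    by (simp add: sum.cartesian_product split_def)
  also have "\<dots> = (\<Sum>n\<le>N. \<Sum>m\<le>N. if m = n then a n * cnj (a n) else 0)"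
    by (intro sum.cong refl) (auto simp: circ_trace_word_def blk_def NC_TF)
  also have "\<dots> = (\<Sum>n\<le>N. complex_of_real ((cmod (a n))\<^sup>2))"
    by (simp only: complex_norm_square sum.delta' finite_atMost atMost_iff order_refl if_True) (simp add: sum.delta)
  finally show ?thesis .
qed

lemma hol_L2: 
  assumes "summable (\<lambda>n. (cmod (a n))\<^sup>2)"
  shows "hol_Lp_norm 2 a = sqrt (suminf (\<lambda>n. (cmod (a n))\<^sup>2))"
proof -
  let ?A = "suminf (\<lambda>n. (cmod (a n))\<^sup>2)"
  have "(\<lambda>N. \<Sum>n\<le>N. (cmod (a n))\<^sup>2) \<longlonglongrightarrow> ?A" by (rule summable_LIMSEQ'[OF assms])
  then have "(\<lambda>N. complex_of_real (\<Sum>n\<le>N. (cmod (a n))\<^sup>2)) \<longlonglongrightarrow> complex_of_real ?A"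
    by (rule tendsto_of_real)
  moreover have "circ_moment (2 div 2) a N = complex_of_real (\<Sum>n\<le>N. (cmod (a n))\<^sup>2)" for N
  proof -
    have "(2::nat) div 2 = 1" by simp
    then show ?thesis by (simp only: circ_moment_1 of_real_sum)
  qed
  ultimately have "(\<lambda>N. circ_moment (2 div 2) a N) \<longlonglongrightarrow> complex_of_real ?A"
    by simp
  then have "lim (\<lambda>N. circ_moment (2 div 2) a N) = complex_of_real ?A" by (rule limI)
  moreover have "0 \<le> ?A" using assms by (intro suminf_nonneg) auto
  ultimately show ?thesis unfolding hol_Lp_norm_def by (simp add: powr_half_sqrt)
qed

lemma dil_bound:
  assumes sa: "summable (\<lambda>n. (cmod (a n))\<^sup>2)" and t: "0 < t" "t < 1"
  shows "\<bar>Wv (\<lambda>n. cmod (dilation t a n)) N (Suc k) []\<bar> \<le> suminf (\<lambda>n. (cmod (a n))\<^sup>2) * (3 * sqrt (suminf (\<lambda>n. (cmod (a n))\<^sup>2)) / t) ^ (2*k)"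
proof -
  let ?A = "suminf (\<lambda>n. (cmod (a n))\<^sup>2)"
  define b where "b n = cmod (dilation t a n)" for n
  have b: "b n = exp (- real n * t) * cmod (a n)" for n
    unfolding b_def dilation_def by (simp add: norm_mult)
  have A0: "0 \<le> ?A" using sa by (intro suminf_nonneg) auto
  have La: "L2_set (\<lambda>n. cmod (a n)) {..N} \<le> sqrt ?A"
    unfolding L2_set_def
    by (intro real_sqrt_le_mono sum_le_suminf[OF sa]) auto
  have Lb: "L2_set b {..N} \<le> sqrt ?A"
  proof -
    have "L2_set b {..N} \<le> L2_set (\<lambda>n. cmod (a n)) {..N}"
    proof (rule L2_set_mono)
      fix n assume "n \<in> {..N}"
      have "exp (- real n * t) \<le> 1" using t by simp
      then show "b n \<le> cmod (a n)" unfolding b by (simp add: mult_left_le_one_le)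
      show "0 \<le> b n" unfolding b by simp
    qed
    then show ?thesis using La by linarith
  qed
  have K: "Kc b N \<le> 3 * sqrt ?A / t"
  proof -
    have "Kc b N = 2 * (\<Sum>n\<le>N. \<bar>cmod (a n)\<bar> * \<bar>exp (- real n * t) * sqrt (real n + 1)\<bar>)"
      unfolding Kc_def b by (simp add: sum_distrib_left abs_mult mult_ac)
    also have "\<dots> \<le> 2 * (L2_set (\<lambda>n. cmod (a n)) {..N} * L2_set (\<lambda>n. exp (- real n * t) * sqrt (real n + 1)) {..N})"
      by (intro mult_left_mono L2_set_mult_ineq) simp
    also have "\<dots> \<le> 2 * (sqrt ?A * (3 / (2*t)))"
    proof (intro mult_left_mono mult_mono La)
      have "L2_set (\<lambda>n. exp (- real n * t) * sqrt (real n + 1)) {..N} \<le> sqrt ((3 / (2*t))\<^sup>2)"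
        unfolding L2_set_def by (intro real_sqrt_le_mono exp_sum_bound t)
      then show "L2_set (\<lambda>n. exp (- real n * t) * sqrt (real n + 1)) {..N} \<le> 3 / (2*t)"
        using t by simp
    qed (auto simp: A0)
    also have "\<dots> = 3 * sqrt ?A / t" using t by (simp add: field_simps)
    finally show ?thesis .
  qed
  have "\<bar>Wv b N (Suc k) []\<bar> \<le> (L2_set b {..N})\<^sup>2 * Kc b N ^ (2*k)" by (rule Wv_bound)
  also have "\<dots> \<le> (sqrt ?A)\<^sup>2 * (3 * sqrt ?A / t) ^ (2*k)"
    by (intro mult_mono power_mono Lb K Kc_nonneg) (auto simp: Kc_nonneg)
  also have "(sqrt ?A)\<^sup>2 = ?A" using A0 by simp
  finally show ?thesis unfolding b_def .
qed

lemma TT_mono: "N \<le> N' \<Longrightarrow> TT N k \<subseteq> TT N' k"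
  unfolding TT_def by auto

lemma conv_bound:
  fixes \<tau> :: "(nat \<times> nat) list \<Rightarrow> complex"
  assumes bd: "\<And>N. (\<Sum>nms\<in>TT N k. cmod (\<tau> nms)) \<le> B"
  shows "convergent (\<lambda>N. \<Sum>nms\<in>TT N k. \<tau> nms) \<and> cmod (lim (\<lambda>N. \<Sum>nms\<in>TT N k. \<tau> nms)) \<le> B"
proof -
  define S where "S N = (\<Sum>nms\<in>TT N k. cmod (\<tau> nms))" for N
  define cm where "cm N = (\<Sum>nms\<in>TT N k. \<tau> nms)" for N
  have inc: "incseq S" unfolding incseq_def S_def
    by (intro allI impI sum_mono2 TT_finite TT_mono) auto
  obtain L where L: "S \<longlonglongrightarrow> L" using incseq_convergent[OF inc, of B] bd unfolding S_def by blast
  then have CS: "Cauchy S" by (rule LIMSEQ_imp_Cauchy)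
  have dle: "dist (cm m) (cm n) \<le> dist (S m) (S n)" for m n
  proof -
    have key: "dist (cm m) (cm n) \<le> S n - S m" if mn: "m \<le> n" for m n
    proof -
      have sub: "TT m k \<subseteq> TT n k" using mn by (rule TT_mono)
      have "cm n - cm m = (\<Sum>nms\<in>TT n k - TT m k. \<tau> nms)"
        unfolding cm_def using sum_diff[OF TT_finite sub, of \<tau>] by simp
      then have "dist (cm m) (cm n) = cmod (\<Sum>nms\<in>TT n k - TT m k. \<tau> nms)"
        by (metis dist_norm norm_minus_commute)
      also have "\<dots> \<le> (\<Sum>nms\<in>TT n k - TT m k. cmod (\<tau> nms))" by (rule norm_sum)
      also have "\<dots> = S n - S m" unfolding S_def using sum_diff[OF TT_finite sub, of "\<lambda>x. cmod (\<tau> x)"] by simp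
      finally show ?thesis .
    qed
    show ?thesis
    proof (cases "m \<le> n")
      case True
      then show ?thesis using key[OF True] by (simp add: dist_real_def)
    next
      case False
      then have "n \<le> m" by simp
      from key[OF this] show ?thesis by (simp add: dist_real_def dist_commute)
    qed
  qed
  have "Cauchy cm"
    unfolding Cauchy_def
  proof (intro allI impI)
    fix e :: real assume "0 < e"
    then obtain M where M: "\<forall>m\<ge>M. \<forall>n\<ge>M. dist (S m) (S n) < e" using CS unfolding Cauchy_def by blast
    show "\<exists>M. \<forall>m\<ge>M. \<forall>n\<ge>M. dist (cm m) (cm n) < e"
      using M dle by (meson le_less_trans)
  qed
  then have conv: "convergent cm" by (simp add: Cauchy_convergent_iff)
  then have "cm \<longlonglongrightarrow> lim cm" by (simp add: convergent_LIMSEQ_iff)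
  then have "(\<lambda>N. cmod (cm N)) \<longlonglongrightarrow> cmod (lim cm)" by (rule tendsto_norm)
  moreover have "cmod (cm N) \<le> B" for N
    using norm_sum[of \<tau> "TT N k"] bd[of N] unfolding cm_def by linarith
  ultimately have "cmod (lim cm) \<le> B" by (intro LIMSEQ_le_const2) auto
  then show ?thesis using conv unfolding cm_def by simp
qed

lemma pow_powr_inv:
  assumes "0 \<le> (X::real)" "0 < p" shows "(X ^ p) powr (1 / real p) = X"
proof (cases "X = 0")
  case True then show ?thesis using assms by simp
next
  case False
  then have X: "0 < X" using assms by simp
  have "(X ^ p) powr (1 / real p) = (X powr real p) powr (1 / real p)" using X by (simp add: powr_realpow)
  also have "\<dots> = X" using assms by (simp add: powr_powr)
  finally show ?thesis .
qed

lemma key_ineq: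
  fixes A t :: real and k0 :: nat
  assumes A: "0 \<le> A" and t: "0 < t"
  defines "p \<equiv> 2 * Suc k0"
  shows "A * (3 * sqrt A / t) ^ (2*k0) \<le> (3 * t powr (-1 + 2 / real p) * sqrt A) ^ p"
proof -
  have tp: "(t powr (-1 + 2 / real p)) ^ p = inverse (t ^ (2*k0))"
  proof -
    have "(t powr (-1 + 2 / real p)) ^ p = (t powr (-1 + 2 / real p)) powr real p"
      using t by (simp add: powr_realpow)
    also have "\<dots> = t powr ((-1 + 2 / real p) * real p)" by (simp add: powr_powr)
    also have "(-1 + 2 / real p) * real p = - real (2*k0)" unfolding p_def by (simp add: field_simps)
    also have "t powr (- real (2*k0)) = inverse (t ^ (2*k0))"
      using t powr_realpow[OF t, of "2*k0"] by (simp add: powr_minus del: of_nat_mult)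
    finally show ?thesis .
  qed
  have sA: "sqrt A ^ p = A ^ Suc k0" unfolding p_def using A by (simp add: power_mult real_sqrt_pow2)
  have sA2: "sqrt A ^ (2*k0) = A ^ k0" using A by (simp add: power_mult real_sqrt_pow2)
  have "A * (3 * sqrt A / t) ^ (2*k0) = 3 ^ (2*k0) * A ^ Suc k0 * inverse (t ^ (2*k0))"
  proof -
    have "(3 * sqrt A / t) ^ (2*k0) = 3 ^ (2*k0) * sqrt A ^ (2*k0) / t ^ (2*k0)"
      by (simp add: power_divide power_mult_distrib)
    then show ?thesis unfolding sA2 by (simp add: field_simps, blast)
  qed
  also have "\<dots> \<le> 3 ^ p * A ^ Suc k0 * inverse (t ^ (2*k0))"
    using A t unfolding p_def by (intro mult_right_mono power_increasing) auto
  also have "\<dots> = 3 ^ p * (t powr (-1 + 2 / real p)) ^ p * sqrt A ^ p"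
    unfolding tp sA by (simp only: mult_ac)
  also have "\<dots> = (3 * t powr (-1 + 2 / real p) * sqrt A) ^ p"
    by (simp only: power_mult_distrib)
  finally show ?thesis .
qed

theorem theorem3p11:
  fixes p :: nat
  assumes "even p" and "p \<ge> 4"
  shows "\<exists>\<alpha>::real. \<forall>(a::nat \<Rightarrow> complex) (t::real).
           summable (\<lambda>n. (cmod (a n))\<^sup>2) \<longrightarrow> 0 < t \<longrightarrow> t < 1 \<longrightarrow>
             convergent (\<lambda>N. circ_moment (p div 2) (dilation t a) N) \<and>
             hol_Lp_norm p (dilation t a) \<le> \<alpha> * t powr (-1 + 2 / real p) * hol_Lp_norm 2 a"
proof -
  obtain k where k: "p = 2 * k" using assms(1) by blast
  then obtain k0 where k0: "k = Suc k0" using assms(2) by (cases k) auto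
  have p: "p = 2 * Suc k0" and pd: "p div 2 = Suc k0" using k k0 by auto
  show ?thesis
  proof (intro exI allI impI)
    fix a :: "nat \<Rightarrow> complex" and t :: real
    assume sa: "summable (\<lambda>n. (cmod (a n))\<^sup>2)" and t0: "0 < t" and t1: "t < 1"
    let ?A = "suminf (\<lambda>n. (cmod (a n))\<^sup>2)"
    let ?B = "?A * (3 * sqrt ?A / t) ^ (2*k0)"
    have A0: "0 \<le> ?A" using sa by (intro suminf_nonneg) auto
    let ?d = "dilation t a"
    let ?\<tau> = "\<lambda>nms. (\<Prod>(n,m)\<leftarrow>nms. ?d n * cnj (?d m)) * circ_trace_word (concat (map blk nms))"
    have bd: "(\<Sum>nms\<in>TT N (Suc k0). cmod (?\<tau> nms)) \<le> ?B" for N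
    proof -
      have "(\<Sum>nms\<in>TT N (Suc k0). cmod (?\<tau> nms)) \<le> Wv (\<lambda>n. cmod (?d n)) N (Suc k0) []"
        by (rule S_le_Wv)
      also have "\<dots> \<le> \<bar>Wv (\<lambda>n. cmod (?d n)) N (Suc k0) []\<bar>" by simp
      also have "\<dots> \<le> ?B" by (rule dil_bound[OF sa t0 t1])
      finally show ?thesis .
    qed
    have cmeq: "(\<lambda>N. circ_moment (p div 2) ?d N) = (\<lambda>N. \<Sum>nms\<in>TT N (Suc k0). ?\<tau> nms)"
      unfolding pd circ_moment_TT ..
    have cb: "convergent (\<lambda>N. \<Sum>nms\<in>TT N (Suc k0). ?\<tau> nms) \<and> cmod (lim (\<lambda>N. \<Sum>nms\<in>TT N (Suc k0). ?\<tau> nms)) \<le> ?B"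
      by (rule conv_bound[OF bd])
    let ?X = "3 * t powr (-1 + 2 / real p) * sqrt ?A"
    have X0: "0 \<le> ?X" using A0 by simp
    have "hol_Lp_norm p ?d = cmod (lim (\<lambda>N. circ_moment (p div 2) ?d N)) powr (1 / real p)"
      unfolding hol_Lp_norm_def ..
    also have "\<dots> \<le> (?X ^ p) powr (1 / real p)"
    proof (rule powr_mono2)
      have "cmod (lim (\<lambda>N. circ_moment (p div 2) ?d N)) \<le> ?B" using cb unfolding cmeq by simp
      also have "?B \<le> ?X ^ p" using key_ineq[OF A0 t0, of k0] p by simp
      finally show "cmod (lim (\<lambda>N. circ_moment (p div 2) ?d N)) \<le> ?X ^ p" .
    qed simp_all
    also have "\<dots> = ?X" by (rule pow_powr_inv[OF X0]) (simp add: p)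
    also have "\<dots> = 3 * t powr (-1 + 2 / real p) * hol_Lp_norm 2 a" by (simp add: hol_L2[OF sa])
    finally show "convergent (\<lambda>N. circ_moment (p div 2) ?d N) \<and> hol_Lp_norm p ?d \<le> 3 * t powr (-1 + 2 / real p) * hol_Lp_norm 2 a"
      using cb cmeq by simp
  qed
qed


end
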